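(* If all the nodes in the graph are given different identities, then the identity of the leader node will be uniquely defined by the high level algorithm.
   Context: A broadcast network is modeled as a connected graph G(V,E) with n nodes, reliable FIFO message delivery with arbitrary finite delays, no failures. The high level (fragment-level) leader election algorithm: nodes are partitioned into fragments each with a candidate; id(F) = (size, candidate identity) ordered lexicographically (by size, then identity); external edges are directed from the larger-id fragment to the smaller-id one. Initially every node is a size-1 fragment in state wait. A fragment with some outgoing edge waits; a fragment whose external edges are all incoming enters work, counts its size new_size after a finite positive delay, and compares with its maximal neighbor F': if new_size > X · size(F') (X > 1) it updates its size, all its external edges become outgoing, and it returns to wait; otherwise it joins F'. A fragment with no external edges is the leader. It has been shown that, with distinct node identities, the sequence of events of this algorithm does not depend on the state delays (waitdelay, workdelay). *)

theory Defs
  imports Complex_Main "HOL-Library.Product_Lexorder"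
begin

datatype fstate = Wait | Work

record 'v frag =
  nodes :: "'v set"
  cand  :: 'v
  fsize :: nat
  fstate_of   :: fstate

definition fid :: "('v \<Rightarrow> 'i::linorder) \<Rightarrow> 'v frag \<Rightarrow> nat \<times> 'i" where
  "fid ident F = (fsize F, ident (cand F))"

definition adjacent :: "('v \<times> 'v) set \<Rightarrow> 'v frag \<Rightarrow> 'v frag \<Rightarrow> bool" where
  "adjacent E F G \<longleftrightarrow> F \<noteq> G \<and> (\<exists>u\<in>nodes F. \<exists>v\<in>nodes G. (u, v) \<in> E)"

definition neighbours :: "('v \<times> 'v) set \<Rightarrow> 'v frag set \<Rightarrow> 'v frag \<Rightarrow> 'v frag set" where
  "neighbours E S F = {G \<in> S. adjacent E F G}"

text \<open>External edges are directed from the larger-id fragment to the smaller-id one;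
  hence all external edges of F are incoming iff F's id is smaller than that of every neighbour.\<close>
definition all_incoming :: "('v \<times> 'v) set \<Rightarrow> ('v \<Rightarrow> 'i::linorder) \<Rightarrow> 'v frag set \<Rightarrow> 'v frag \<Rightarrow> bool" where
  "all_incoming E ident S F \<longleftrightarrow> (\<forall>G\<in>neighbours E S F. fid ident F < fid ident G)"

definition is_leader :: "('v \<times> 'v) set \<Rightarrow> 'v frag set \<Rightarrow> 'v frag \<Rightarrow> bool" where
  "is_leader E S F \<longleftrightarrow> F \<in> S \<and> neighbours E S F = {}"

definition init_state :: "'v set \<Rightarrow> 'v frag set" where
  "init_state V = (\<lambda>v. \<lparr>nodes = {v}, cand = v, fsize = 1, fstate_of = Wait\<rparr>) ` V"

text \<open>Atomic events. Arbitrary finite delays are modelled by arbitrary interleaving of events.\<close>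
inductive alg_step :: "('v \<times> 'v) set \<Rightarrow> ('v \<Rightarrow> 'i::linorder) \<Rightarrow> real
    \<Rightarrow> 'v frag set \<Rightarrow> 'v frag set \<Rightarrow> bool"
  for E ident X where
  enter_work:
    "\<lbrakk> F \<in> S; fstate_of F = Wait; neighbours E S F \<noteq> {}; all_incoming E ident S F \<rbrakk>
     \<Longrightarrow> alg_step E ident X S (insert (F\<lparr>fstate_of := Work\<rparr>) (S - {F}))"
| grow:
    "\<lbrakk> F \<in> S; fstate_of F = Work; F' \<in> neighbours E S F;
       \<forall>G\<in>neighbours E S F. fid ident G \<le> fid ident F';
       real (card (nodes F)) > X * real (fsize F') \<rbrakk>
     \<Longrightarrow> alg_step E ident X S (insert (F\<lparr>fsize := card (nodes F), fstate_of := Wait\<rparr>) (S - {F}))"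
| join:
    "\<lbrakk> F \<in> S; fstate_of F = Work; F' \<in> neighbours E S F;
       \<forall>G\<in>neighbours E S F. fid ident G \<le> fid ident F';
       \<not> real (card (nodes F)) > X * real (fsize F') \<rbrakk>
     \<Longrightarrow> alg_step E ident X S (insert (F'\<lparr>nodes := nodes F' \<union> nodes F\<rparr>) (S - {F, F'}))"

end

theory Submission imports Defs begin

definition invar :: "'v set \<Rightarrow> ('v \<times> 'v) set \<Rightarrow> ('v \<Rightarrow> 'i::linorder) \<Rightarrow> 'v frag set \<Rightarrow> bool" where
"invar V E ident S \<longleftrightarrow> (\<forall>F\<in>S. nodes F \<noteq> {} \<and> nodes F \<subseteq> V \<and> cand F \<in> nodes F) \<and>
   (\<forall>F\<in>S. \<forall>G\<in>S. F \<noteq> G \<longrightarrow> nodes F \<inter> nodes G = {}) \<and> \<Union>(nodes ` S) = V \<and>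
   (\<forall>F\<in>S. fstate_of F = Work \<longrightarrow> all_incoming E ident S F)"

locale ctx =
  fixes V :: "'v set" and E :: "('v \<times> 'v) set" and ident :: "'v \<Rightarrow> 'i::linorder" and X :: real
  assumes symE: "sym E" and injI: "inj_on ident V"
begin

abbreviation "nb S F \<equiv> neighbours E S F"
abbreviation "ai S F \<equiv> all_incoming E ident S F"
abbreviation "fd F \<equiv> fid ident F"
abbreviation "I S \<equiv> invar V E ident S"
abbreviation "step \<equiv> alg_step E ident X"

lemma adj_sym: "adjacent E F G \<Longrightarrow> adjacent E G F"
  using symE unfolding adjacent_def sym_def by blast

lemma invD:
  assumes "I S"
  shows "F \<in> S \<Longrightarrow> nodes F \<noteq> {}" "F \<in> S \<Longrightarrow> nodes F \<subseteq> V" "F \<in> S \<Longrightarrow> cand F \<in> nodes F"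
    "F \<in> S \<Longrightarrow> G \<in> S \<Longrightarrow> F \<noteq> G \<Longrightarrow> nodes F \<inter> nodes G = {}"
    "\<Union>(nodes ` S) = V" "F \<in> S \<Longrightarrow> fstate_of F = Work \<Longrightarrow> ai S F"
  using assms unfolding invar_def by simp_all

lemma nodes_neq: "I S \<Longrightarrow> F \<in> S \<Longrightarrow> G \<in> S \<Longrightarrow> F \<noteq> G \<Longrightarrow> nodes F \<noteq> nodes G"
  using invD(1,4) by fastforce

lemma fid_neq: 
  assumes "I S" "F \<in> S" "G \<in> S" "F \<noteq> G" shows "fd F \<noteq> fd G"
proof
  assume a5: "fd F = fd G"
  have "cand F \<in> nodes F" "cand G \<in> nodes G" "nodes F \<inter> nodes G = {}" "nodes F \<subseteq> V" "nodes G \<subseteq> V"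
    using invD[OF assms(1)] assms by auto
  then have "cand F \<noteq> cand G" "cand F \<in> V" "cand G \<in> V" by auto
  then show False using a5 injI unfolding fid_def inj_on_def by auto
qed

lemma ai_nadj: "F \<in> S \<Longrightarrow> G \<in> S \<Longrightarrow> ai S F \<Longrightarrow> ai S G \<Longrightarrow> \<not> adjacent E F G"
  unfolding all_incoming_def neighbours_def using adj_sym
  by (metis (mono_tags, lifting) mem_Collect_eq order_less_asym)

lemma ai_work: "I S \<Longrightarrow> F \<in> S \<Longrightarrow> fstate_of F = Work \<Longrightarrow> ai S F"
  using invD(6) by blast

lemma nb_repl_other:
  assumes "H \<in> S" "H \<noteq> F" "\<not> adjacent E H F" "nodes F2 = nodes F"
  shows "nb (insert F2 (S - {F})) H = nb S H"
  using assms unfolding neighbours_def adjacent_def by auto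

lemma nb_repl_self:
  assumes "I S" "F \<in> S" "nodes F2 = nodes F"
  shows "nb (insert F2 (S - {F})) F2 = nb S F"
  using assms nodes_neq[OF assms(1,2)] unfolding neighbours_def adjacent_def by auto

lemma nb_join_other:
  assumes "I S" "H \<in> S" "F \<in> S" "F' \<in> S" "H \<noteq> F" "H \<noteq> F'" "\<not> adjacent E H F"
    "nodes F'' = nodes F' \<union> nodes F"
  shows "nb (insert F'' (S - {F, F'})) H = (if F' \<in> nb S H then insert F'' (nb S H - {F'}) else nb S H)"
proof -
  have d: "nodes H \<inter> nodes F = {}" "nodes H \<inter> nodes F' = {}" "nodes H \<noteq> {}"
    using invD[OF assms(1)] assms by auto
  then have "H \<noteq> F''" using assms(8) by auto
  show ?thesis
  proof (rule set_eqI)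
    fix K
    show "K \<in> nb (insert F'' (S - {F, F'})) H \<longleftrightarrow>
       K \<in> (if F' \<in> nb S H then insert F'' (nb S H - {F'}) else nb S H)"
    proof (cases "K = F''")
      case True
      have "adjacent E H F'' \<longleftrightarrow> adjacent E H F'"
      proof -
        have "adjacent E H F'' \<longleftrightarrow> (\<exists>u\<in>nodes H. \<exists>v\<in>nodes F' \<union> nodes F. (u, v) \<in> E)"
          using \<open>H \<noteq> F''\<close> assms(8) unfolding adjacent_def by simp
        also have "\<dots> \<longleftrightarrow> (\<exists>u\<in>nodes H. \<exists>v\<in>nodes F'. (u, v) \<in> E)"
          using assms(5,7) unfolding adjacent_def by blast
        also have "\<dots> \<longleftrightarrow> adjacent E H F'" using assms(6) unfolding adjacent_def by simp
        finally show ?thesis .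
      qed
      then show ?thesis using True assms(4) unfolding neighbours_def by auto
    next
      case False
      then show ?thesis using assms(3,4,5,6,7) unfolding neighbours_def by (auto split: if_splits)
    qed
  qed
qed

definition maxnb where "maxnb S F F' \<longleftrightarrow> F' \<in> nb S F \<and> (\<forall>K\<in>nb S F. fd K \<le> fd F')"

definition enter_ev where
  "enter_ev S F \<longleftrightarrow> F \<in> S \<and> fstate_of F = Wait \<and> nb S F \<noteq> {} \<and> ai S F"
definition grow_ev where
  "grow_ev S F F' \<longleftrightarrow> F \<in> S \<and> fstate_of F = Work \<and> maxnb S F F' \<and> real (card (nodes F)) > X * real (fsize F')"
definition join_ev where
  "join_ev S F F' \<longleftrightarrow> F \<in> S \<and> fstate_of F = Work \<and> maxnb S F F' \<and> \<not> real (card (nodes F)) > X * real (fsize F')"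

definition "enter_r S F = insert (F\<lparr>fstate_of := Work\<rparr>) (S - {F})"
definition "grow_r S F = insert (F\<lparr>fsize := card (nodes F), fstate_of := Wait\<rparr>) (S - {F})"
definition "join_r S F F' = insert (F'\<lparr>nodes := nodes F' \<union> nodes F\<rparr>) (S - {F, F'})"

definition ev where
  "ev S F T \<longleftrightarrow> (enter_ev S F \<and> T = enter_r S F) \<or> (\<exists>F'. grow_ev S F F' \<and> T = grow_r S F)
     \<or> (\<exists>F'. join_ev S F F' \<and> T = join_r S F F')"

lemma step_iff: "step S T \<longleftrightarrow> (\<exists>F. ev S F T)"
proof
  assume "step S T" then show "\<exists>F. ev S F T"
    by cases (auto simp: ev_def enter_ev_def grow_ev_def join_ev_def maxnb_def enter_r_def grow_r_def join_r_def)
next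
  assume "\<exists>F. ev S F T"
  then obtain F where "ev S F T" by blast
  then show "step S T"
    unfolding ev_def enter_ev_def grow_ev_def join_ev_def maxnb_def enter_r_def grow_r_def join_r_def
    by (auto intro: alg_step.intros)
qed

lemma target:
  assumes "maxnb S F F'"
  shows "F' \<in> S" "adjacent E F F'" "F' \<noteq> F"
  using assms unfolding maxnb_def neighbours_def adjacent_def by auto

lemma ev_actor: assumes "I S" "ev S F T" shows "F \<in> S" "ai S F"
  using assms ai_work unfolding ev_def enter_ev_def grow_ev_def join_ev_def by auto

lemma ev_nb: assumes "ev S F T" shows "nb S F \<noteq> {}"
  using assms unfolding ev_def enter_ev_def grow_ev_def join_ev_def maxnb_def by auto

lemma maxnb_unique: assumes "I S" "maxnb S F F1" "maxnb S F F2" shows "F1 = F2"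
proof (rule ccontr)
  assume "F1 \<noteq> F2"
  moreover have "F1 \<in> S" "F2 \<in> S" using target assms by blast+
  moreover have "fd F1 \<le> fd F2" "fd F2 \<le> fd F1" using assms(2,3) unfolding maxnb_def by auto
  ultimately show False using fid_neq[OF assms(1)] by force
qed

lemma ev_det: assumes "I S" "ev S F A" "ev S F B" shows "A = B"
  using assms maxnb_unique[OF assms(1)]
  unfolding ev_def enter_ev_def grow_ev_def join_ev_def by force

lemma target_not_ai:
  assumes "I S" "maxnb S F F'" "ai S F" "F \<in> S" shows "\<not> ai S F'"
  using ai_nadj[of F S F'] target[OF assms(2)] assms by blast

lemma target_wait:
  assumes "I S" "maxnb S F F'" "ai S F" "F \<in> S" shows "fstate_of F' = Wait"
  using target_not_ai[OF assms] ai_work[OF assms(1)] target[OF assms(2)] by (cases "fstate_of F'") auto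


definition "phiJ a b = (\<lambda>K. if K = a then b else K)"

lemma view_join:
  assumes "I S" "F \<in> S" "F' \<in> S" "H \<in> S" "H \<noteq> F" "H \<noteq> F'" "\<not> adjacent E H F"
  shows "H \<in> join_r S F F'" "nb (join_r S F F') H = phiJ F' (F'\<lparr>nodes := nodes F' \<union> nodes F\<rparr>) ` nb S H"
proof -
  show "H \<in> join_r S F F'" using assms unfolding join_r_def by auto
  have "nb (join_r S F F') H = (if F' \<in> nb S H then insert (F'\<lparr>nodes := nodes F' \<union> nodes F\<rparr>) (nb S H - {F'}) else nb S H)"
    unfolding join_r_def by (rule nb_join_other) (use assms in auto)
  also have "\<dots> = phiJ F' (F'\<lparr>nodes := nodes F' \<union> nodes F\<rparr>) ` nb S H"
    unfolding phiJ_def by (auto simp: image_def)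
  finally show "nb (join_r S F F') H = phiJ F' (F'\<lparr>nodes := nodes F' \<union> nodes F\<rparr>) ` nb S H" .
qed

lemma phiJ_fd: "fd (phiJ F' (F'\<lparr>nodes := N\<rparr>) K) = fd K \<and> fsize (phiJ F' (F'\<lparr>nodes := N\<rparr>) K) = fsize K"
  unfolding phiJ_def fid_def by simp

lemma persist_gen:
  assumes "G \<in> A" "nb A G = \<phi> ` nb S G" "\<forall>K\<in>nb S G. fd (\<phi> K) = fd K \<and> fsize (\<phi> K) = fsize K"
  shows "enter_ev S G \<Longrightarrow> enter_ev A G" "grow_ev S G G' \<Longrightarrow> grow_ev A G (\<phi> G')"
    "join_ev S G G' \<Longrightarrow> join_ev A G (\<phi> G')"
proof -
  have ai: "ai A G \<longleftrightarrow> ai S G" using assms(2,3) unfolding all_incoming_def by auto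
  have mx: "maxnb A G (\<phi> G')" if "maxnb S G G'"
    using that assms(2,3) unfolding maxnb_def by auto
  have sz: "maxnb S G G' \<Longrightarrow> fsize (\<phi> G') = fsize G'" using assms(3) unfolding maxnb_def by auto
  show "enter_ev S G \<Longrightarrow> enter_ev A G" using ai assms(1,2) unfolding enter_ev_def by auto
  show "grow_ev S G G' \<Longrightarrow> grow_ev A G (\<phi> G')" using mx sz assms(1) unfolding grow_ev_def by auto
  show "join_ev S G G' \<Longrightarrow> join_ev A G (\<phi> G')" using mx sz assms(1) unfolding join_ev_def by auto
qed

lemma inv_repl:
  assumes "I S" "F \<in> S" "ai S F" "nodes F2 = nodes F" "cand F2 = cand F"
    "fstate_of F2 = Work \<Longrightarrow> fd F2 = fd F"
  shows "I (insert F2 (S - {F}))"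
proof -
  let ?T = "insert F2 (S - {F})"
  note D = invD[OF assms(1)]
  have c1: "\<forall>K\<in>?T. nodes K \<noteq> {} \<and> nodes K \<subseteq> V \<and> cand K \<in> nodes K"
    using D(1,2,3) assms by auto
  have c2: "\<forall>K\<in>?T. \<forall>L\<in>?T. K \<noteq> L \<longrightarrow> nodes K \<inter> nodes L = {}"
  proof (intro ballI impI)
    fix K L assume "K \<in> ?T" "L \<in> ?T" "K \<noteq> L"
    then consider "K = F2" "L \<in> S" "L \<noteq> F" | "L = F2" "K \<in> S" "K \<noteq> F" | "K \<in> S" "L \<in> S"
      by auto
    then show "nodes K \<inter> nodes L = {}"
    proof cases
      case 1 then show ?thesis using D(4)[of F L] assms(2,4) by simp
    next
      case 2 then show ?thesis using D(4)[of K F] assms(2,4) by simp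
    next
      case 3 then show ?thesis using D(4)[of K L] \<open>K \<noteq> L\<close> by simp
    qed
  qed
  have c3: "\<Union>(nodes ` ?T) = V" using D(5) assms(2,4) by auto
  have c4: "\<forall>K\<in>?T. fstate_of K = Work \<longrightarrow> ai ?T K"
  proof (intro ballI impI)
    fix K assume K: "K \<in> ?T" "fstate_of K = Work"
    show "ai ?T K"
    proof (cases "K = F2")
      case True
      then show ?thesis using nb_repl_self[OF assms(1,2,4)] assms(3,6) K(2)
        unfolding all_incoming_def by auto
    next
      case False
      then have "K \<in> S" "K \<noteq> F" using K by auto
      then have "ai S K" using ai_work[OF assms(1)] K by auto
      then have "\<not> adjacent E K F" using ai_nadj[OF \<open>K \<in> S\<close> assms(2)] assms(3) by blast
      then show ?thesis using nb_repl_other[OF \<open>K \<in> S\<close> \<open>K \<noteq> F\<close> _ assms(4)] \<open>ai S K\<close>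
        unfolding all_incoming_def by simp
    qed
  qed
  show ?thesis unfolding invar_def using c1 c2 c3 c4 by blast
qed

lemma inv_join:
  assumes "I S" "F \<in> S" "ai S F" "maxnb S F F'"
  shows "I (join_r S F F')"
proof -
  let ?F2 = "F'\<lparr>nodes := nodes F' \<union> nodes F\<rparr>"
  let ?T = "join_r S F F'"
  note D = invD[OF assms(1)]
  note tg = target[OF assms(4)]
  have wt: "fstate_of F' = Wait" using target_wait[OF assms(1,4,3,2)] .
  have T: "?T = insert ?F2 (S - {F, F'})" unfolding join_r_def ..
  have c1: "\<forall>K\<in>?T. nodes K \<noteq> {} \<and> nodes K \<subseteq> V \<and> cand K \<in> nodes K"
    using D(1,2,3) assms(2) tg unfolding T by auto
  have c2: "\<forall>K\<in>?T. \<forall>L\<in>?T. K \<noteq> L \<longrightarrow> nodes K \<inter> nodes L = {}"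
  proof (intro ballI impI)
    fix K L assume "K \<in> ?T" "L \<in> ?T" "K \<noteq> L"
    then show "nodes K \<inter> nodes L = {}"
      using D(4)[of F] D(4)[of F'] D(4) assms(2) tg unfolding T by (auto, blast+)
  qed
  have c3: "\<Union>(nodes ` ?T) = V" using D(5) assms(2) tg unfolding T by auto
  have c4: "\<forall>K\<in>?T. fstate_of K = Work \<longrightarrow> ai ?T K"
  proof (intro ballI impI)
    fix K assume K: "K \<in> ?T" "fstate_of K = Work"
    have "K \<noteq> ?F2" using K(2) wt by auto
    then have "K \<in> S" "K \<noteq> F" "K \<noteq> F'" using K unfolding T by auto
    then have "ai S K" using ai_work[OF assms(1)] K by auto
    then have "\<not> adjacent E K F" using ai_nadj[OF \<open>K \<in> S\<close> assms(2)] assms(3) by blast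
    then have "nb ?T K = phiJ F' ?F2 ` nb S K"
      using view_join(2)[OF assms(1,2) tg(1) \<open>K \<in> S\<close> \<open>K \<noteq> F\<close> \<open>K \<noteq> F'\<close>] by blast
    then show "ai ?T K" using \<open>ai S K\<close> phiJ_fd unfolding all_incoming_def by auto
  qed
  show ?thesis unfolding invar_def using c1 c2 c3 c4 by blast
qed

lemma inv_ev: assumes "I S" "ev S F T" shows "I T"
proof -
  have F: "F \<in> S" "ai S F" using ev_actor[OF assms] by auto
  show ?thesis using assms(2) unfolding ev_def
  proof (elim disjE exE conjE)
    assume "enter_ev S F" "T = enter_r S F"
    then show ?thesis unfolding enter_r_def using inv_repl[OF assms(1) F] by (simp add: fid_def)
  next
    fix F' assume "grow_ev S F F'" "T = grow_r S F"
    have "I (insert (F\<lparr>fsize := card (nodes F), fstate_of := Wait\<rparr>) (S - {F}))"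
      by (rule inv_repl[OF assms(1) F]) simp_all
    then show ?thesis using \<open>T = grow_r S F\<close> unfolding grow_r_def by simp
  next
    fix F' assume "join_ev S F F'" "T = join_r S F F'"
    then show ?thesis using inv_join[OF assms(1) F] unfolding join_ev_def by simp
  qed
qed

lemma inv_step: "I S \<Longrightarrow> step S T \<Longrightarrow> I T"
  using inv_ev step_iff by blast


definition evRN where
  "evRN S F R N \<longleftrightarrow> (enter_ev S F \<and> R = {F} \<and> N = F\<lparr>fstate_of := Work\<rparr>)
     \<or> (\<exists>F'. grow_ev S F F' \<and> R = {F} \<and> N = F\<lparr>fsize := card (nodes F), fstate_of := Wait\<rparr>)
     \<or> (\<exists>F'. join_ev S F F' \<and> R = {F, F'} \<and> N = F'\<lparr>nodes := nodes F' \<union> nodes F\<rparr>)"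

lemma ev_RN: "ev S F T \<longleftrightarrow> (\<exists>R N. evRN S F R N \<and> T = insert N (S - R))"
proof
  assume "ev S F T" then show "\<exists>R N. evRN S F R N \<and> T = insert N (S - R)"
    unfolding ev_def evRN_def enter_r_def grow_r_def join_r_def by (elim disjE exE conjE) blast+
next
  assume "\<exists>R N. evRN S F R N \<and> T = insert N (S - R)"
  then obtain R N where h: "evRN S F R N" "T = insert N (S - R)" by blast
  from h(1) show "ev S F T" unfolding evRN_def
  proof (elim disjE exE conjE)
    assume "enter_ev S F" "R = {F}" "N = F\<lparr>fstate_of := Work\<rparr>"
    then show ?thesis using h(2) unfolding ev_def enter_r_def by simp
  next
    fix F' assume "grow_ev S F F'" "R = {F}" "N = F\<lparr>fsize := card (nodes F), fstate_of := Wait\<rparr>"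
    then show ?thesis using h(2) unfolding ev_def grow_r_def by blast
  next
    fix F' assume "join_ev S F F'" "R = {F, F'}" "N = F'\<lparr>nodes := nodes F' \<union> nodes F\<rparr>"
    then show ?thesis using h(2) unfolding ev_def join_r_def by blast
  qed
qed

lemma neqK: "I S \<Longrightarrow> K \<in> S \<Longrightarrow> M \<in> S \<Longrightarrow> M \<noteq> K \<Longrightarrow> nodes M \<subseteq> nodes N \<Longrightarrow> N \<noteq> K"
  using invD(1,4) by fastforce

lemma evRN_basic:
  assumes "I S" "evRN S F R N"
  shows "F \<in> S" "ai S F" "F \<in> R" "nodes F \<subseteq> nodes N"
    "\<And>K. K \<in> R \<Longrightarrow> K \<noteq> F \<Longrightarrow> \<exists>F'. maxnb S F F' \<and> K = F'"
proof -
  have "ev S F (insert N (S - R))" using assms(2) ev_RN by blast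
  then show "F \<in> S" "ai S F" using ev_actor[OF assms(1)] by auto
  show "F \<in> R" "nodes F \<subseteq> nodes N" using assms(2) unfolding evRN_def by auto
  show "\<And>K. K \<in> R \<Longrightarrow> K \<noteq> F \<Longrightarrow> \<exists>F'. maxnb S F F' \<and> K = F'"
    using assms(2) unfolding evRN_def grow_ev_def join_ev_def by auto
qed

lemma notin:
  assumes "I S" "evRN S F RF NF" "evRN S G RG NG" "F \<noteq> G"
  shows "NF \<notin> RG"
proof
  assume "NF \<in> RG"
  note bF = evRN_basic[OF assms(1,2)] and bG = evRN_basic[OF assms(1,3)]
  show False
  proof (cases "NF = G")
    case True
    then show ?thesis using neqK[OF assms(1) bG(1) bF(1) assms(4) bF(4)] by simp
  next
    case False
    then obtain G' where G': "maxnb S G G'" "NF = G'" using bG(5) \<open>NF \<in> RG\<close> by blast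
    have "F \<noteq> G'" using target_not_ai[OF assms(1) G'(1) bG(2,1)] bF(2) by blast
    then show ?thesis using neqK[OF assms(1) target(1)[OF G'(1)] bF(1) _ bF(4)] G'(2) by simp
  qed
qed

lemma persist:
  assumes "I S" "evRN S F RF NF" "evRN S G RG NG" "F \<noteq> G"
    "\<not> (\<exists>T. join_ev S F T \<and> join_ev S G T)"
  shows "evRN (insert NF (S - RF)) G RG NG"
proof -
  note bF = evRN_basic[OF assms(1,2)] and bG = evRN_basic[OF assms(1,3)]
  let ?A = "insert NF (S - RF)"
  have nadj: "\<not> adjacent E G F" using ai_nadj[OF bG(1) bF(1) bG(2) bF(2)] .
  have GnR: "G \<notin> RF"
  proof
    assume "G \<in> RF"
    then obtain F' where "maxnb S F F'" "G = F'" using bF(5) assms(4) by metis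
    then show False using target_not_ai[OF assms(1) _ bF(2,1)] bG(2) by blast
  qed
  have GA: "G \<in> ?A" using bG(1) GnR by auto
  show ?thesis using assms(2)[unfolded evRN_def]
  proof (elim disjE exE conjE)
    assume h: "enter_ev S F" "RF = {F}" "NF = F\<lparr>fstate_of := Work\<rparr>"
    have nbA: "nb ?A G = id ` nb S G" using nb_repl_other[OF bG(1) assms(4)[symmetric] nadj] h by simp
    have fs: "\<forall>K\<in>nb S G. fd (id K) = fd K \<and> fsize (id K) = fsize K" by simp
    note P = persist_gen[OF GA nbA fs]
    show ?thesis using assms(3) P unfolding evRN_def by (auto simp: h)
  next
    fix F' assume h: "grow_ev S F F'" "RF = {F}" "NF = F\<lparr>fsize := card (nodes F), fstate_of := Wait\<rparr>"
    have nbA: "nb ?A G = id ` nb S G" using nb_repl_other[OF bG(1) assms(4)[symmetric] nadj] h by simp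
    have fs: "\<forall>K\<in>nb S G. fd (id K) = fd K \<and> fsize (id K) = fsize K" by simp
    note P = persist_gen[OF GA nbA fs]
    show ?thesis using assms(3) P unfolding evRN_def by (auto simp: h)
  next
    fix F' assume h: "join_ev S F F'" "RF = {F, F'}" "NF = F'\<lparr>nodes := nodes F' \<union> nodes F\<rparr>"
    have mF: "maxnb S F F'" using h(1) unfolding join_ev_def by simp
    have "G \<noteq> F'" using GnR h(2) by auto
    have "nb ?A G = phiJ F' NF ` nb S G"
      using view_join(2)[OF assms(1) bF(1) target(1)[OF mF] bG(1) assms(4)[symmetric] \<open>G \<noteq> F'\<close> nadj]
      h unfolding join_r_def by simp
    have fs: "\<forall>K\<in>nb S G. fd (phiJ F' NF K) = fd K \<and> fsize (phiJ F' NF K) = fsize K"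
      using phiJ_fd h(3) by simp
    note P = persist_gen[OF GA \<open>nb ?A G = phiJ F' NF ` nb S G\<close> fs]
    show ?thesis using assms(3)[unfolded evRN_def]
    proof (elim disjE exE conjE)
      assume "enter_ev S G" "RG = {G}" "NG = G\<lparr>fstate_of := Work\<rparr>"
      then show ?thesis using P(1) unfolding evRN_def by blast
    next
      fix G' assume "grow_ev S G G'" "RG = {G}" "NG = G\<lparr>fsize := card (nodes G), fstate_of := Wait\<rparr>"
      then show ?thesis using P(2) unfolding evRN_def by blast
    next
      fix G' assume g: "join_ev S G G'" "RG = {G, G'}" "NG = G'\<lparr>nodes := nodes G' \<union> nodes G\<rparr>"
      have "G' \<noteq> F'" using g(1) h(1) assms(5) by blast
      then have "phiJ F' NF G' = G'" unfolding phiJ_def by simp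
      then show ?thesis using P(3)[OF g(1)] g unfolding evRN_def by metis
    qed
  qed
qed

lemma swap: "N1 \<notin> R2 \<Longrightarrow> N2 \<notin> R1 \<Longrightarrow>
   insert N2 (insert N1 (S - R1) - R2) = insert N1 (insert N2 (S - R2) - R1)"
  by auto

lemma commute_simple:
  assumes "I S" "evRN S F RF NF" "evRN S G RG NG" "F \<noteq> G"
    "\<not> (\<exists>T. join_ev S F T \<and> join_ev S G T)"
  shows "\<exists>C. ev (insert NF (S - RF)) G C \<and> ev (insert NG (S - RG)) F C"
proof -
  have 1: "evRN (insert NF (S - RF)) G RG NG" by (rule persist[OF assms])
  have 2: "evRN (insert NG (S - RG)) F RF NF" by (rule persist[of S G RG NG F RF NF]) (use assms in auto)
  have "NF \<notin> RG" by (rule notin[OF assms(1-4)])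
  moreover have "NG \<notin> RF" by (rule notin[of S G RG NG F RF NF]) (use assms in auto)
  ultimately show ?thesis using 1 2 swap[of NF RG NG RF S] unfolding ev_RN by metis
qed

lemma commute_join:
  assumes "I S" "join_ev S F F'" "join_ev S G F'" "F \<noteq> G"
  shows "\<exists>C. ev (join_r S F F') G C \<and> ev (join_r S G F') F C"
proof -
  have mF: "maxnb S F F'" and mG: "maxnb S G F'" using assms(2,3) unfolding join_ev_def by auto
  have F: "F \<in> S" "ai S F" and G: "G \<in> S" "ai S G"
    using ev_actor[OF assms(1)] assms(2,3) unfolding ev_def by blast+
  note tF = target[OF mF] and tG = target[OF mG]
  have nadj: "\<not> adjacent E G F" "\<not> adjacent E F G" using ai_nadj F G by blast+
  have GF': "G \<noteq> F'" "F \<noteq> F'" using target_not_ai[OF assms(1) mF F(2,1)] target_not_ai[OF assms(1) mG G(2,1)] F G by blast+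
  define F1 where "F1 = F'\<lparr>nodes := nodes F' \<union> nodes F\<rparr>"
  define G1 where "G1 = F'\<lparr>nodes := nodes F' \<union> nodes G\<rparr>"
  have vA: "nb (join_r S F F') G = phiJ F' F1 ` nb S G" "G \<in> join_r S F F'"
    using view_join[OF assms(1) F(1) tF(1) G(1) assms(4)[symmetric] GF'(1) nadj(1)] unfolding F1_def by auto
  have vB: "nb (join_r S G F') F = phiJ F' G1 ` nb S F" "F \<in> join_r S G F'"
    using view_join[OF assms(1) G(1) tF(1) F(1) assms(4) GF'(2) nadj(2)] unfolding G1_def by auto
  have jA: "join_ev (join_r S F F') G F1"
    using persist_gen(3)[OF vA(2) vA(1) _ assms(3)] phiJ_fd unfolding F1_def phiJ_def by simp
  have jB: "join_ev (join_r S G F') F G1"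
    using persist_gen(3)[OF vB(2) vB(1) _ assms(2)] phiJ_fd unfolding G1_def phiJ_def by simp
  have F1n: "F1 \<notin> S - {F, F'}"
  proof
    assume "F1 \<in> S - {F, F'}"
    then show False using neqK[OF assms(1), of F1 F F1] F(1) unfolding F1_def by auto
  qed
  have G1n: "G1 \<notin> S - {G, F'}"
  proof
    assume "G1 \<in> S - {G, F'}"
    then show False using neqK[OF assms(1), of G1 G G1] G(1) unfolding G1_def by auto
  qed
  have e1: "insert F1 (S - {F, F'}) - {G, F1} = S - {F, F', G}" using F1n by blast
  have e2: "insert G1 (S - {G, F'}) - {F, G1} = S - {G, F', F}" using G1n by blast
  have "join_r (join_r S F F') G F1 = insert (F1\<lparr>nodes := nodes F1 \<union> nodes G\<rparr>) (S - {F, F', G})"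
    unfolding join_r_def F1_def[symmetric] e1 ..
  also have "\<dots> = insert (G1\<lparr>nodes := nodes G1 \<union> nodes F\<rparr>) (S - {G, F', F})"
    unfolding F1_def G1_def by (auto simp: Un_ac insert_commute)
  also have "\<dots> = join_r (join_r S G F') F G1"
    unfolding join_r_def G1_def[symmetric] e2 ..
  finally show ?thesis using jA jB unfolding ev_def by blast
qed

lemma diamond:
  assumes "I S" "step S A" "step S B"
  shows "A = B \<or> (\<exists>C. step A C \<and> step B C)"
proof -
  obtain F where eF: "ev S F A" using assms(2) step_iff by blast
  obtain G where eG: "ev S G B" using assms(3) step_iff by blast
  show ?thesis
  proof (cases "F = G")
    case True then show ?thesis using ev_det[OF assms(1) eF] eG by simp
  next
    case False
    show ?thesis
    proof (cases "\<exists>T. join_ev S F T \<and> join_ev S G T")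
      case True
      then obtain T where T: "join_ev S F T" "join_ev S G T" by blast
      have "A = join_r S F T" "B = join_r S G T"
        using ev_det[OF assms(1) eF] ev_det[OF assms(1) eG] T unfolding ev_def by blast+
      then show ?thesis using commute_join[OF assms(1) T False] step_iff by blast
    next
      case nj: False
      obtain RF NF where F: "evRN S F RF NF" "A = insert NF (S - RF)" using eF ev_RN by blast
      obtain RG NG where G: "evRN S G RG NG" "B = insert NG (S - RG)" using eG ev_RN by blast
      show ?thesis using commute_simple[OF assms(1) F(1) G(1) False nj] F(2) G(2) step_iff by blast
    qed
  qed
qed


lemma inv_rt: "step\<^sup>*\<^sup>* S T \<Longrightarrow> I S \<Longrightarrow> I T"
  by (induction rule: rtranclp_induct) (auto intro: inv_step)

lemma strip:
  assumes "I S" "step S A" "step\<^sup>*\<^sup>* S B"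
  shows "\<exists>C. step\<^sup>*\<^sup>* A C \<and> (B = C \<or> step B C)"
  using assms(3)
proof (induction rule: rtranclp_induct)
  case base then show ?case using assms(2) by blast
next
  case (step B B')
  then obtain C where C: "step\<^sup>*\<^sup>* A C" "B = C \<or> step B C" by blast
  show ?case
  proof (cases "B = C")
    case True
    then have "step\<^sup>*\<^sup>* A B'" using C(1) step(2) by (simp add: rtranclp.rtrancl_into_rtrancl)
    then show ?thesis by blast
  next
    case False
    then have "step B C" using C by blast
    have "I B" using inv_rt[OF step(1) assms(1)] .
    from diamond[OF this \<open>step B C\<close> step(2)] show ?thesis
    proof
      assume "C = B'" then show ?thesis using C(1) by blast
    next
      assume "\<exists>D. step C D \<and> step B' D"
      then obtain D where "step C D" "step B' D" by blast
      then have "step\<^sup>*\<^sup>* A D" using C(1) by (simp add: rtranclp.rtrancl_into_rtrancl)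
      then show ?thesis using \<open>step B' D\<close> by blast
    qed
  qed
qed

lemma confl:
  assumes "step\<^sup>*\<^sup>* S A" "I S"
  shows "\<forall>B. step\<^sup>*\<^sup>* S B \<longrightarrow> (\<exists>C. step\<^sup>*\<^sup>* A C \<and> step\<^sup>*\<^sup>* B C)"
  using assms
proof (induction rule: converse_rtranclp_induct)
  case base then show ?case by blast
next
  case (step S S')
  show ?case
  proof (intro allI impI)
    fix B assume "step\<^sup>*\<^sup>* S B"
    then obtain D where D: "step\<^sup>*\<^sup>* S' D" "B = D \<or> step B D" using strip[OF step(4) step(1)] by blast
    have "I S'" using inv_step[OF step(4,1)] .
    then obtain C where "step\<^sup>*\<^sup>* A C" "step\<^sup>*\<^sup>* D C" using step(3) D(1) by blast
    moreover have "step\<^sup>*\<^sup>* B D" using D(2) by auto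
    ultimately show "\<exists>C. step\<^sup>*\<^sup>* A C \<and> step\<^sup>*\<^sup>* B C" by (meson rtranclp_trans)
  qed
qed

lemma leader_all:
  assumes "I S" "E \<subseteq> V \<times> V" "\<forall>u\<in>V. \<forall>v\<in>V. (u, v) \<in> E\<^sup>*" "is_leader E S L" "K \<in> S"
  shows "K = L"
proof (rule ccontr)
  assume "K \<noteq> L"
  note D = invD[OF assms(1)]
  have L: "L \<in> S" "nb S L = {}" using assms(4) unfolding is_leader_def by auto
  obtain u where u: "u \<in> nodes L" using D(1)[OF L(1)] by blast
  obtain w where w: "w \<in> nodes K" using D(1)[OF assms(5)] by blast
  have uV: "u \<in> V" "w \<in> V" using u w D(2) L(1) assms(5) by blast+
  have "(u, w) \<in> E\<^sup>*" using assms(3) uV by blast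
  then have "w \<in> nodes L"
  proof (induction rule: rtrancl_induct)
    case base then show ?case using u .
  next
    case (step y z)
    have "z \<in> V" using step(2) assms(2) by blast
    then obtain M where M: "M \<in> S" "z \<in> nodes M" using D(5) by blast
    show ?case
    proof (cases "M = L")
      case True then show ?thesis using M by simp
    next
      case False
      then have "adjacent E L M" unfolding adjacent_def using step(2,3) M(2) by blast
      then have "M \<in> nb S L" unfolding neighbours_def using M(1) by blast
      then show ?thesis using L(2) by blast
    qed
  qed
  then show False using w D(4)[OF assms(5) L(1) \<open>K \<noteq> L\<close>] by blast
qed

lemma leader_terminal:
  assumes "I S" "E \<subseteq> V \<times> V" "\<forall>u\<in>V. \<forall>v\<in>V. (u, v) \<in> E\<^sup>*" "is_leader E S L"
  shows "\<not> step S T"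
proof
  assume "step S T"
  then obtain F where "ev S F T" using step_iff by blast
  then have "F \<in> S" "nb S F \<noteq> {}" using ev_actor[OF assms(1)] ev_nb by blast+
  moreover have "F = L" using leader_all[OF assms \<open>F \<in> S\<close>] .
  ultimately show False using assms(4) unfolding is_leader_def by simp
qed

lemma init_inv: "I (init_state V)"
  unfolding invar_def init_state_def all_incoming_def by auto

end

theorem corollary1:
  fixes V :: "'v set" and E :: "('v \<times> 'v) set" and ident :: "'v \<Rightarrow> 'i::linorder" and X :: real
  assumes "finite V"
    and "E \<subseteq> V \<times> V"
    and "sym E"
    and "\<forall>u\<in>V. \<forall>v\<in>V. (u, v) \<in> E\<^sup>*"
    and "X > 1"
    and "inj_on ident V"
    and "(alg_step E ident X)\<^sup>*\<^sup>* (init_state V) S1" and "is_leader E S1 L1"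
    and "(alg_step E ident X)\<^sup>*\<^sup>* (init_state V) S2" and "is_leader E S2 L2"
  shows "ident (cand L1) = ident (cand L2)"
proof -
  interpret c: ctx V E ident X using assms(3,6) by unfold_locales
  have I0: "invar V E ident (init_state V)" by (rule c.init_inv)
  have I1: "invar V E ident S1" using c.inv_rt[OF assms(7) I0] .
  obtain C where C: "(alg_step E ident X)\<^sup>*\<^sup>* S1 C" "(alg_step E ident X)\<^sup>*\<^sup>* S2 C"
    using c.confl[OF assms(7) I0] assms(9) by blast
  have t1: "\<And>T. \<not> alg_step E ident X S1 T" using c.leader_terminal[OF I1 assms(2,4,8)] by blast
  have I2: "invar V E ident S2" using c.inv_rt[OF assms(9) I0] .
  have t2: "\<And>T. \<not> alg_step E ident X S2 T" using c.leader_terminal[OF I2 assms(2,4,10)] by blast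
  have "C = S1" using C(1) t1 by (cases rule: converse_rtranclpE) auto
  moreover have "C = S2" using C(2) t2 by (cases rule: converse_rtranclpE) auto
  ultimately have "S1 = S2" by simp
  then have "L2 \<in> S1" using assms(10) unfolding is_leader_def by simp
  then have "L2 = L1" using c.leader_all[OF I1 assms(2,4,8)] by blast
  then show ?thesis by simp
qed

end
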